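(* In the setting described in the context, let $$X=W^{1/2}R^T\big(RWR^TL_{e,s}^\tau RWR^T\big)^{-1}RW^{1/2},\qquad Y=W^{1/2}R^T\big(RWR^T\big)^{-1}RW^{1/2}.$$ Then $\lambda_{\max}(X+Y)=\lambda_{\max}(X)+\lambda_{\max}(Y)$.
   Context: Let $\mathcal G$ be an undirected, connected graph without self-loops, with node set $\{1,\dots,n\}$ ($n\ge2$) and edge set $\mathcal E$, $m=|\mathcal E|$. Give each edge an arbitrary orientation; the incidence matrix $D\in\mathbb R^{n\times m}$ has $D_{il}=1$ if node $i$ is the initial node of edge $l$, $-1$ if it is the terminal node, and $0$ otherwise. Fix a spanning tree $\mathcal G_\tau$ and order the edges so the first $n-1$ are tree edges; write $D=[D_\tau\ D_c]$ with $D_\tau\in\mathbb R^{n\times(n-1)}$. Set $T_\tau^c=(D_\tau^TD_\tau)^{-1}D_\tau^TD_c$ and $R=[I_{n-1}\ T_\tau^c]\in\mathbb R^{(n-1)\times m}$. Let $W=\mathrm{diag}(w_1,\dots,w_m)$, $w_l>0$, and $E=\mathrm{diag}(\epsilon_1,\dots,\epsilon_n)$, $\epsilon_i>0$; $W^{1/2}$ is taken entrywise. Define $L_{e,s}^\tau=D_\tau^TE^{-1}D_\tau$. $\lambda_{\max}$ denotes the largest eigenvalue of a symmetric matrix. *)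

theory Defs
  imports Complex_Main "Jordan_Normal_Form.Char_Poly"
begin

(* Nodes are 0,...,n-1 (the paper's nodes 1..n, shifted by one).
   An oriented edge list es: es!l = (initial node, terminal node) of edge l. *)

definition edge_rel :: "(nat \<times> nat) list \<Rightarrow> (nat \<times> nat) set" where
  "edge_rel F = {(a,b). (a,b) \<in> set F \<or> (b,a) \<in> set F}"

definition connected_on :: "nat \<Rightarrow> (nat \<times> nat) list \<Rightarrow> bool" where
  "connected_on n F = (\<forall>i<n. \<forall>j<n. (i,j) \<in> (edge_rel F)\<^sup>*)"

definition valid_graph :: "nat \<Rightarrow> (nat \<times> nat) list \<Rightarrow> bool" where
  "valid_graph n es = ((\<forall>(a,b)\<in>set es. a < n \<and> b < n \<and> a \<noteq> b)
      \<and> distinct (map (\<lambda>(a,b). {a,b}) es))"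

definition spanning_tree :: "nat \<Rightarrow> (nat \<times> nat) list \<Rightarrow> bool" where
  "spanning_tree n F = (connected_on n F \<and>
      (\<forall>k<length F. \<not> connected_on n (take k F @ drop (Suc k) F)))"

definition incidence_mat :: "nat \<Rightarrow> (nat \<times> nat) list \<Rightarrow> real mat" where
  "incidence_mat n es = mat n (length es) (\<lambda>(i,l).
     if i = fst (es!l) then 1 else if i = snd (es!l) then -1 else 0)"

definition D_tree :: "nat \<Rightarrow> (nat \<times> nat) list \<Rightarrow> real mat" where
  "D_tree n es = mat n (n-1) (\<lambda>(i,l). incidence_mat n es $$ (i,l))"

definition D_cot :: "nat \<Rightarrow> (nat \<times> nat) list \<Rightarrow> real mat" where
  "D_cot n es = mat n (length es - (n-1)) (\<lambda>(i,l). incidence_mat n es $$ (i, l + (n-1)))"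

(* matrix inverse of a square matrix (meaningful when invertible) *)
definition matinv :: "real mat \<Rightarrow> real mat" where
  "matinv A = (SOME B. B \<in> carrier_mat (dim_row A) (dim_row A) \<and>
                       A * B = 1\<^sub>m (dim_row A) \<and> B * A = 1\<^sub>m (dim_row A))"

definition T_tc :: "nat \<Rightarrow> (nat \<times> nat) list \<Rightarrow> real mat" where
  "T_tc n es = matinv ((D_tree n es)\<^sup>T * D_tree n es) * (D_tree n es)\<^sup>T * D_cot n es"

definition R_mat :: "nat \<Rightarrow> (nat \<times> nat) list \<Rightarrow> real mat" where
  "R_mat n es = mat (n-1) (length es) (\<lambda>(i,j).
      if j < n-1 then (if i = j then 1 else 0) else T_tc n es $$ (i, j - (n-1)))"

definition L_es_tau :: "nat \<Rightarrow> (nat \<times> nat) list \<Rightarrow> (nat \<Rightarrow> real) \<Rightarrow> real mat" where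
  "L_es_tau n es \<epsilon> = (D_tree n es)\<^sup>T * matinv (mat_diag n \<epsilon>) * D_tree n es"

definition lambda_max :: "real mat \<Rightarrow> real" where
  "lambda_max A = Max {k. eigenvalue A k}"

end

theory Submission
  imports Defs "Jordan_Normal_Form.Spectral_Radius"
begin

lemma herm_pt:
  "Re (cnj a * of_real s * b) = s * Re a * Re b + s * Im a * Im b"
  "Im (cnj a * of_real s * b) = s * Re a * Im b - s * Im a * Re b"
  by (simp_all add: algebra_simps)

lemma herm_sum:
  fixes S :: "nat \<Rightarrow> nat \<Rightarrow> real" and z :: "nat \<Rightarrow> complex"
  assumes sym: "\<And>i j. S i j = S j i"
  shows "(\<Sum>i<k. \<Sum>j<k. cnj (z i) * of_real (S i j) * z j) =
    of_real ((\<Sum>i<k. \<Sum>j<k. S i j * Re (z i) * Re (z j)) + (\<Sum>i<k. \<Sum>j<k. S i j * Im (z i) * Im (z j)))"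
proof (rule complex_eqI)
  have "Re (\<Sum>i<k. \<Sum>j<k. cnj (z i) * of_real (S i j) * z j) = (\<Sum>i<k. \<Sum>j<k. S i j * Re (z i) * Re (z j) + S i j * Im (z i) * Im (z j))"
    by (simp only: Re_sum herm_pt)
  also have "\<dots> = (\<Sum>i<k. \<Sum>j<k. S i j * Re (z i) * Re (z j)) + (\<Sum>i<k. \<Sum>j<k. S i j * Im (z i) * Im (z j))"
    by (simp only: sum.distrib)
  finally show "Re (\<Sum>i<k. \<Sum>j<k. cnj (z i) * of_real (S i j) * z j) = Re (of_real ((\<Sum>i<k. \<Sum>j<k. S i j * Re (z i) * Re (z j)) + (\<Sum>i<k. \<Sum>j<k. S i j * Im (z i) * Im (z j))))"
    by simp
  have "(\<Sum>i<k. \<Sum>j<k. S i j * Im (z i) * Re (z j)) = (\<Sum>j<k. \<Sum>i<k. S i j * Im (z i) * Re (z j))"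
    by (rule sum.swap)
  also have "\<dots> = (\<Sum>i<k. \<Sum>j<k. S i j * Re (z i) * Im (z j))"
    by (intro sum.cong refl) (simp add: sym mult.commute mult.left_commute)
  finally have e: "(\<Sum>i<k. \<Sum>j<k. S i j * Im (z i) * Re (z j)) = (\<Sum>i<k. \<Sum>j<k. S i j * Re (z i) * Im (z j))" .
  have "Im (\<Sum>i<k. \<Sum>j<k. cnj (z i) * of_real (S i j) * z j) = (\<Sum>i<k. \<Sum>j<k. S i j * Re (z i) * Im (z j) - S i j * Im (z i) * Re (z j))"
    by (simp only: Im_sum herm_pt)
  also have "\<dots> = (\<Sum>i<k. \<Sum>j<k. S i j * Re (z i) * Im (z j)) - (\<Sum>i<k. \<Sum>j<k. S i j * Im (z i) * Re (z j))"
    by (simp only: sum_subtractf)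
  finally show "Im (\<Sum>i<k. \<Sum>j<k. cnj (z i) * of_real (S i j) * z j) = Im (of_real ((\<Sum>i<k. \<Sum>j<k. S i j * Re (z i) * Re (z j)) + (\<Sum>i<k. \<Sum>j<k. S i j * Im (z i) * Im (z j))))"
    using e by simp
qed

lemma quad_sum:
  fixes S :: "'a::comm_semiring_0 mat"
  assumes "S \<in> carrier_mat k k" "a \<in> carrier_vec k"
  shows "a \<bullet> (S *\<^sub>v a) = (\<Sum>i<k. \<Sum>j<k. S $$ (i,j) * a $ i * a $ j)"
  using assms by (auto simp: scalar_prod_def sum_distrib_left lessThan_atLeast0 algebra_simps intro!: sum.cong)

lemma quad_nonneg:
  fixes S :: "real mat"
  assumes S: "S \<in> carrier_mat k k" and pd: "\<forall>a\<in>carrier_vec k. a \<noteq> 0\<^sub>v k \<longrightarrow> a \<bullet> (S *\<^sub>v a) > 0"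
    and a: "a \<in> carrier_vec k"
  shows "a \<bullet> (S *\<^sub>v a) \<ge> 0"
proof (cases "a = 0\<^sub>v k")
  case True thus ?thesis using S by simp
next
  case False thus ?thesis using pd a by force
qed

lemma pos_real_eig:
  fixes L M :: "real mat"
  assumes L: "L \<in> carrier_mat k k" and M: "M \<in> carrier_mat k k"
    and Ls: "transpose_mat L = L" and Ms: "transpose_mat M = M"
    and Lpd: "\<forall>a\<in>carrier_vec k. a \<noteq> 0\<^sub>v k \<longrightarrow> a \<bullet> (L *\<^sub>v a) > 0"
    and Mpd: "\<forall>a\<in>carrier_vec k. a \<noteq> 0\<^sub>v k \<longrightarrow> a \<bullet> (M *\<^sub>v a) > 0"
    and k: "k > 0"
  shows "\<exists>\<kappa>>0. eigenvalue (L * M) \<kappa>"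
proof -
  let ?h = "of_real_hom.mat_hom :: real mat \<Rightarrow> complex mat"
  define Ac where "Ac = ?h (L * M)"
  define Lc where "Lc = ?h L"
  define Mc where "Mc = ?h M"
  have LM: "L * M \<in> carrier_mat k k" using L M by simp
  have Ac: "Ac \<in> carrier_mat k k" unfolding Ac_def using LM by simp
  have AcLM: "Ac = Lc * Mc" unfolding Ac_def Lc_def Mc_def using of_real_hom.mat_hom_mult[OF L M] .
  have Lc: "Lc \<in> carrier_mat k k" and Mc: "Mc \<in> carrier_mat k k" unfolding Lc_def Mc_def using L M by auto
  from spectrum_non_empty[OF Ac k] obtain lam where "eigenvalue Ac lam" unfolding spectrum_def by auto
  then obtain z where ev: "eigenvector Ac z lam" unfolding eigenvalue_def by auto
  hence z: "z \<in> carrier_vec k" "z \<noteq> 0\<^sub>v k" and Az: "Ac *\<^sub>v z = lam \<cdot>\<^sub>v z"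
    unfolding eigenvector_def using Ac by auto
  define y where "y = Mc *\<^sub>v z"
  have y: "y \<in> carrier_vec k" unfolding y_def using Mc z by simp
  have Ly: "Lc *\<^sub>v y = lam \<cdot>\<^sub>v z" unfolding y_def using Az AcLM assoc_mult_mat_vec[OF Lc Mc z(1)] by simp
  have Lsym: "\<And>i j. i < k \<Longrightarrow> j < k \<Longrightarrow> L $$ (i,j) = L $$ (j,i)"
    using Ls L by (metis carrier_matD index_transpose_mat(1))
  have Msym: "\<And>i j. i < k \<Longrightarrow> j < k \<Longrightarrow> M $$ (i,j) = M $$ (j,i)"
    using Ms M by (metis carrier_matD index_transpose_mat(1))
  define H where "H S w = (\<Sum>i<k. \<Sum>j<k. cnj (w $ i) * of_real (S $$ (i,j)) * w $ j)" for S :: "real mat" and w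
  have Hpos: "\<exists>r>0. H S w = of_real r"
    if S: "S \<in> carrier_mat k k" and Ss: "\<And>i j. i < k \<Longrightarrow> j < k \<Longrightarrow> S $$ (i,j) = S $$ (j,i)"
      and pd: "\<forall>a\<in>carrier_vec k. a \<noteq> 0\<^sub>v k \<longrightarrow> a \<bullet> (S *\<^sub>v a) > 0"
      and w: "w \<in> carrier_vec k" "w \<noteq> 0\<^sub>v k" for S w
  proof -
    define S' where "S' i j = (if i < k \<and> j < k then S $$ (i,j) else 0)" for i j
    have S's: "S' i j = S' j i" for i j unfolding S'_def using Ss by auto
    define a where "a = vec k (\<lambda>i. Re (w $ i))"
    define b where "b = vec k (\<lambda>i. Im (w $ i))"
    have "H S w = (\<Sum>i<k. \<Sum>j<k. cnj (w $ i) * of_real (S' i j) * w $ j)"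
      unfolding H_def S'_def by (auto intro!: sum.cong)
    also have "\<dots> = of_real ((\<Sum>i<k. \<Sum>j<k. S' i j * Re (w $ i) * Re (w $ j)) + (\<Sum>i<k. \<Sum>j<k. S' i j * Im (w $ i) * Im (w $ j)))"
      by (rule herm_sum[OF S's])
    also have "(\<Sum>i<k. \<Sum>j<k. S' i j * Re (w $ i) * Re (w $ j)) = a \<bullet> (S *\<^sub>v a)"
      by (subst quad_sum[OF S], simp add: a_def) (auto simp: a_def S'_def intro!: sum.cong)
    also have "(\<Sum>i<k. \<Sum>j<k. S' i j * Im (w $ i) * Im (w $ j)) = b \<bullet> (S *\<^sub>v b)"
      by (subst quad_sum[OF S], simp add: b_def) (auto simp: b_def S'_def intro!: sum.cong)
    finally have eq: "H S w = of_real (a \<bullet> (S *\<^sub>v a) + b \<bullet> (S *\<^sub>v b))" .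
    have ab: "a \<in> carrier_vec k" "b \<in> carrier_vec k" unfolding a_def b_def by auto
    have "a \<noteq> 0\<^sub>v k \<or> b \<noteq> 0\<^sub>v k"
    proof (rule ccontr)
      assume "\<not> ?thesis"
      hence "\<And>i. i < k \<Longrightarrow> Re (w $ i) = 0 \<and> Im (w $ i) = 0" unfolding a_def b_def
        by (metis index_vec index_zero_vec(1))
      hence "w = 0\<^sub>v k" using w(1) by (intro eq_vecI) (auto simp: complex_eq_iff)
      thus False using w(2) by simp
    qed
    hence "a \<bullet> (S *\<^sub>v a) + b \<bullet> (S *\<^sub>v b) > 0"
      using quad_nonneg[OF S pd ab(1)] quad_nonneg[OF S pd ab(2)] pd ab by force
    thus ?thesis using eq by blast
  qed
  have Hvec: "(\<Sum>i<k. cnj (w $ i) * (?h S *\<^sub>v w) $ i) = H S w"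
    if S: "S \<in> carrier_mat k k" and w: "w \<in> carrier_vec k" for S w
    using S w by (auto simp: H_def scalar_prod_def sum_distrib_left lessThan_atLeast0 algebra_simps intro!: sum.cong)
  obtain rm where rm: "rm > 0" "H M z = of_real rm" using Hpos[OF M Msym Mpd z] by blast
  have yne: "y \<noteq> 0\<^sub>v k"
  proof
    assume "y = 0\<^sub>v k"
    hence "H M z = 0" unfolding Hvec[OF M z(1), symmetric] using y_def Mc_def by simp
    thus False using rm by simp
  qed
  obtain rl where rl: "rl > 0" "H L y = of_real rl" using Hpos[OF L Lsym Lpd y yne] by blast
  have "H L y = (\<Sum>i<k. cnj (y $ i) * (lam * z $ i))"
    unfolding Hvec[OF L y, symmetric] Lc_def[symmetric] Ly using z by simp
  also have "\<dots> = lam * (\<Sum>i<k. cnj (y $ i) * z $ i)" by (simp add: sum_distrib_left algebra_simps)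
  also have "(\<Sum>i<k. cnj (y $ i) * z $ i) = (\<Sum>i<k. \<Sum>j<k. of_real (M $$ (i,j)) * cnj (z $ j) * z $ i)"
    unfolding y_def Mc_def using M z
    by (auto simp: scalar_prod_def sum_distrib_right sum_distrib_left lessThan_atLeast0 algebra_simps intro!: sum.cong)
  also have "\<dots> = (\<Sum>j<k. \<Sum>i<k. of_real (M $$ (i,j)) * cnj (z $ j) * z $ i)" by (rule sum.swap)
  also have "\<dots> = H M z" unfolding H_def using Msym
    by (auto simp: algebra_simps intro!: sum.cong)
  finally have "of_real rl = lam * of_real rm" using rl rm by simp
  hence lam: "lam = of_real (rl / rm)" using rm by (simp add: field_simps)
  have "eigenvalue Ac lam" using ev unfolding eigenvalue_def by auto
  hence "poly (char_poly Ac) lam = 0" using eigenvalue_root_char_poly[OF Ac] by simp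
  hence "poly (char_poly (L * M)) (rl / rm) = 0"
    unfolding Ac_def of_real_hom.char_poly_hom[OF LM] lam of_real_hom.poly_map_poly by simp
  hence "eigenvalue (L * M) (rl / rm)" using eigenvalue_root_char_poly[OF LM] by simp
  thus ?thesis using rl rm by (intro exI[of _ "rl/rm"]) auto
qed

lemma finite_eig: "(A :: real mat) \<in> carrier_mat k k \<Longrightarrow> finite {x. eigenvalue A x}"
  using card_finite_spectrum(1) unfolding spectrum_def by blast

lemma eigD: assumes "eigenvalue A x" "A \<in> carrier_mat k k"
  shows "\<exists>v. v \<in> carrier_vec k \<and> v \<noteq> 0\<^sub>v k \<and> A *\<^sub>v v = x \<cdot>\<^sub>v v"
  using assms unfolding eigenvalue_def eigenvector_def by auto

lemma eigI: assumes "A \<in> carrier_mat k k" "v \<in> carrier_vec k" "v \<noteq> 0\<^sub>v k" "A *\<^sub>v v = x \<cdot>\<^sub>v v"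
  shows "eigenvalue A x"
  using assms unfolding eigenvalue_def eigenvector_def by auto

lemma sq_pos: fixes v :: "real vec" assumes v: "v \<in> carrier_vec k" "v \<noteq> 0\<^sub>v k"
  shows "v \<bullet> v > 0"
proof -
  obtain i where i: "i < k" "v $ i \<noteq> 0"
    using v by (metis eq_vecI carrier_vecD index_zero_vec(1) index_zero_vec(2))
  have "v \<bullet> v = (\<Sum>j\<in>{0..<k}. v $ j * v $ j)" using v by (simp add: scalar_prod_def)
  also have "\<dots> > 0" by (rule sum_pos2[of _ i]) (use i in \<open>auto simp: zero_less_mult_iff linorder_neq_iff\<close>)
  finally show ?thesis .
qed

lemma smult_cancel: fixes v :: "real vec"
  assumes "v \<in> carrier_vec k" "v \<noteq> 0\<^sub>v k" "c \<cdot>\<^sub>v v = d \<cdot>\<^sub>v v" shows "c = d"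
proof -
  obtain i where i: "i < k" "v $ i \<noteq> 0"
    using assms by (metis eq_vecI carrier_vecD index_zero_vec(1) index_zero_vec(2))
  have "(c \<cdot>\<^sub>v v) $ i = (d \<cdot>\<^sub>v v) $ i" using assms(3) by simp
  moreover have "dim_vec v = k" using assms(1) by simp
  ultimately have "c * v $ i = d * v $ i" using i by simp
  thus ?thesis using i(2) by simp
qed

lemma smult_cancel_left: fixes a b :: "real vec"
  assumes c: "c \<noteq> 0" and e: "c \<cdot>\<^sub>v a = c \<cdot>\<^sub>v b" shows "a = b"
proof -
  have d: "dim_vec a = dim_vec b" using arg_cong[OF e, of dim_vec] by simp
  show ?thesis
  proof (rule eq_vecI)
    fix i assume i: "i < dim_vec b"
    have "(c \<cdot>\<^sub>v a) $ i = (c \<cdot>\<^sub>v b) $ i" using e by simp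
    hence "c * a $ i = c * b $ i" using d i by simp
    thus "a $ i = b $ i" using c by simp
  qed (simp add: d)
qed

lemma core:
  fixes B L Minv Qinv :: "real mat"
  assumes B: "B \<in> carrier_mat m p" and L: "L \<in> carrier_mat p p" and Ls: "transpose_mat L = L"
    and Lpd: "\<forall>a\<in>carrier_vec p. a \<noteq> 0\<^sub>v p \<longrightarrow> a \<bullet> (L *\<^sub>v a) > 0"
    and Binj: "\<forall>u\<in>carrier_vec p. B *\<^sub>v u = 0\<^sub>v m \<longrightarrow> u = 0\<^sub>v p"
    and p: "p > 0"
    and Minv: "Minv \<in> carrier_mat p p" "(transpose_mat B * B) * Minv = 1\<^sub>m p" "Minv * (transpose_mat B * B) = 1\<^sub>m p"
    and Qinv: "Qinv \<in> carrier_mat p p" 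
       "(transpose_mat B * B) * L * (transpose_mat B * B) * Qinv = 1\<^sub>m p"
       "Qinv * ((transpose_mat B * B) * L * (transpose_mat B * B)) = 1\<^sub>m p"
  shows "lambda_max (B * Qinv * transpose_mat B + B * Minv * transpose_mat B)
       = lambda_max (B * Qinv * transpose_mat B) + lambda_max (B * Minv * transpose_mat B)"
proof -
  define M where "M = transpose_mat B * B"
  define X where "X = B * Qinv * transpose_mat B"
  define Y where "Y = B * Minv * transpose_mat B"
  have Bt: "transpose_mat B \<in> carrier_mat p m" using B by simp
  have M: "M \<in> carrier_mat p p" unfolding M_def using B by simp
  have X: "X \<in> carrier_mat m m" unfolding X_def using B Qinv by simp
  have Y: "Y \<in> carrier_mat m m" unfolding Y_def using B Minv by simp
  have Ms: "transpose_mat M = M" unfolding M_def using B by (simp add: transpose_mult[OF Bt B])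
  have Mpd: "\<forall>a\<in>carrier_vec p. a \<noteq> 0\<^sub>v p \<longrightarrow> a \<bullet> (M *\<^sub>v a) > 0"
  proof (intro ballI impI)
    fix a :: "real vec" assume a: "a \<in> carrier_vec p" "a \<noteq> 0\<^sub>v p"
    have Ba: "B *\<^sub>v a \<in> carrier_vec m" using B a by simp
    have "a \<bullet> (M *\<^sub>v a) = a \<bullet> (transpose_mat B *\<^sub>v (B *\<^sub>v a))"
      unfolding M_def using assoc_mult_mat_vec[OF Bt B a(1)] by simp
    also have "\<dots> = (transpose_mat B *\<^sub>v (B *\<^sub>v a)) \<bullet> a"
      by (rule comm_scalar_prod[OF a(1)]) (use Bt Ba in simp)
    also have "\<dots> = (B *\<^sub>v a) \<bullet> (B *\<^sub>v a)"
      by (rule transpose_vec_mult_scalar[OF B a(1) Ba])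
    finally have eq: "a \<bullet> (M *\<^sub>v a) = (B *\<^sub>v a) \<bullet> (B *\<^sub>v a)" .
    have "B *\<^sub>v a \<noteq> 0\<^sub>v m" using Binj a by auto
    hence "(B *\<^sub>v a) \<bullet> (B *\<^sub>v a) > 0" using Ba sq_pos by blast
    thus "a \<bullet> (M *\<^sub>v a) > 0" using eq by simp
  qed
  obtain kap where kap: "kap > 0" "eigenvalue (L * M) kap"
    using pos_real_eig[OF L M Ls Ms Lpd Mpd p] by blast
  have LM: "L * M \<in> carrier_mat p p" using L M by simp
  obtain u where u: "u \<in> carrier_vec p" "u \<noteq> 0\<^sub>v p" "(L * M) *\<^sub>v u = kap \<cdot>\<^sub>v u"
    using eigD[OF kap(2) LM] by blast
  have Q: "M * L * M \<in> carrier_mat p p" using M L by simp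
  have MLMQ: "M * L * M * Qinv = 1\<^sub>m p" "Qinv * (M * L * M) = 1\<^sub>m p" using Qinv unfolding M_def by auto
  have MMinv: "M * Minv = 1\<^sub>m p" "Minv * M = 1\<^sub>m p" using Minv unfolding M_def by auto
  have Mu: "M *\<^sub>v u \<in> carrier_vec p" using M u by simp
  have "(M * L * M) *\<^sub>v u = M *\<^sub>v ((L * M) *\<^sub>v u)"
  proof -
    have "M * L * M = M * (L * M)" using assoc_mult_mat[OF M L M] .
    thus ?thesis using assoc_mult_mat_vec[OF M LM u(1)] by simp
  qed
  also have "\<dots> = kap \<cdot>\<^sub>v (M *\<^sub>v u)" using u M by (simp add: mult_mat_vec)
  finally have Qu: "(M * L * M) *\<^sub>v u = kap \<cdot>\<^sub>v (M *\<^sub>v u)" .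
  have QMu: "Qinv *\<^sub>v (M *\<^sub>v u) = (1 / kap) \<cdot>\<^sub>v u"
  proof -
    have "M *\<^sub>v u = (1/kap) \<cdot>\<^sub>v ((M * L * M) *\<^sub>v u)" using Qu kap(1) Mu by (simp add: smult_smult_assoc)
    hence "Qinv *\<^sub>v (M *\<^sub>v u) = (1/kap) \<cdot>\<^sub>v (Qinv *\<^sub>v ((M * L * M) *\<^sub>v u))"
      using Qinv(1) Q u by (simp add: mult_mat_vec)
    also have "Qinv *\<^sub>v ((M * L * M) *\<^sub>v u) = u"
      using assoc_mult_mat_vec[OF Qinv(1) Q u(1)] MLMQ(2) u(1) by simp
    finally show ?thesis .
  qed
  define v where "v = B *\<^sub>v u"
  have v: "v \<in> carrier_vec m" "v \<noteq> 0\<^sub>v m" unfolding v_def using B u Binj by auto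
  have BQ: "B * Qinv \<in> carrier_mat m p" using B Qinv(1) by simp
  have "X *\<^sub>v v = (B * Qinv) *\<^sub>v (transpose_mat B *\<^sub>v (B *\<^sub>v u))"
    unfolding X_def v_def using assoc_mult_mat_vec[OF BQ Bt, of "B *\<^sub>v u"] B u(1) by simp
  also have "transpose_mat B *\<^sub>v (B *\<^sub>v u) = M *\<^sub>v u"
    unfolding M_def using assoc_mult_mat_vec[OF Bt B u(1)] by simp
  also have "(B * Qinv) *\<^sub>v (M *\<^sub>v u) = B *\<^sub>v (Qinv *\<^sub>v (M *\<^sub>v u))"
    using assoc_mult_mat_vec[OF B Qinv(1) Mu] .
  also have "\<dots> = (1/kap) \<cdot>\<^sub>v v" unfolding QMu v_def using B u by (simp add: mult_mat_vec)
  finally have Xv: "X *\<^sub>v v = (1/kap) \<cdot>\<^sub>v v" .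
  have eX: "eigenvalue X (1/kap)" by (rule eigI[OF X v Xv])
  have MinvM: "Minv *\<^sub>v (M *\<^sub>v x) = x" if "x \<in> carrier_vec p" for x
    using assoc_mult_mat_vec[OF Minv(1) M that, symmetric] MMinv(2) that by simp
  have BtB: "transpose_mat B *\<^sub>v (B *\<^sub>v x) = M *\<^sub>v x" if "x \<in> carrier_vec p" for x
    unfolding M_def using assoc_mult_mat_vec[OF Bt B that] by simp
  have BMinv: "B * Minv \<in> carrier_mat m p" using B Minv(1) by simp
  have Yv: "Y *\<^sub>v v = B *\<^sub>v (Minv *\<^sub>v (transpose_mat B *\<^sub>v v))" if "v \<in> carrier_vec m" for v
    unfolding Y_def using assoc_mult_mat_vec[OF BMinv Bt that] assoc_mult_mat_vec[OF B Minv(1), of "transpose_mat B *\<^sub>v v"] Bt that by simp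
  have Xv': "X *\<^sub>v v = B *\<^sub>v (Qinv *\<^sub>v (transpose_mat B *\<^sub>v v))" if "v \<in> carrier_vec m" for v
    unfolding X_def using assoc_mult_mat_vec[OF BQ Bt that] assoc_mult_mat_vec[OF B Qinv(1), of "transpose_mat B *\<^sub>v v"] Bt that by simp
  have YB: "Y *\<^sub>v (B *\<^sub>v x) = B *\<^sub>v x" if x: "x \<in> carrier_vec p" for x
    using Yv[of "B *\<^sub>v x"] B x BtB[OF x] MinvM[OF x] by simp
  have YX: "Y *\<^sub>v (X *\<^sub>v v) = X *\<^sub>v v" if "v \<in> carrier_vec m" for v
    using Xv'[OF that] YB[of "Qinv *\<^sub>v (transpose_mat B *\<^sub>v v)"] Qinv(1) Bt that by simp
  have YY: "Y *\<^sub>v (Y *\<^sub>v v) = Y *\<^sub>v v" if "v \<in> carrier_vec m" for v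
    using Yv[OF that] YB[of "Minv *\<^sub>v (transpose_mat B *\<^sub>v v)"] Minv(1) Bt that by simp
  define e0 :: "real vec" where "e0 = unit_vec p 0"
  have e0: "e0 \<in> carrier_vec p" "e0 \<noteq> 0\<^sub>v p"
  proof -
    show "e0 \<in> carrier_vec p" unfolding e0_def by simp
    have "e0 $ 0 = 1" unfolding e0_def using p by simp
    moreover have "(0\<^sub>v p :: real vec) $ 0 = 0" using p by simp
    ultimately show "e0 \<noteq> 0\<^sub>v p" by auto
  qed
  have Be0: "B *\<^sub>v e0 \<in> carrier_vec m" "B *\<^sub>v e0 \<noteq> 0\<^sub>v m" using B e0 Binj by auto
  have eY1: "eigenvalue Y 1" by (rule eigI[OF Y Be0]) (use YB[OF e0(1)] Be0 in simp)
  have eY: "x = 0 \<or> x = 1" if ev: "eigenvalue Y x" for x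
  proof -
    obtain w where w: "w \<in> carrier_vec m" "w \<noteq> 0\<^sub>v m" "Y *\<^sub>v w = x \<cdot>\<^sub>v w" using eigD[OF ev Y] by blast
    have "Y *\<^sub>v (x \<cdot>\<^sub>v w) = x \<cdot>\<^sub>v w" using YY[OF w(1)] w(3) by simp
    hence "x \<cdot>\<^sub>v (x \<cdot>\<^sub>v w) = x \<cdot>\<^sub>v w" using w Y by (simp add: mult_mat_vec)
    hence "(x * x) \<cdot>\<^sub>v w = x \<cdot>\<^sub>v w" by (simp add: smult_smult_assoc)
    hence "x * x = x" by (rule smult_cancel[OF w(1,2)])
    hence "x * (x - 1) = 0" by (simp add: algebra_simps)
    thus ?thesis by simp
  qed
  have XY: "X + Y \<in> carrier_mat m m" using X Y by simp
  have eXY1: "eigenvalue (X + Y) (x + 1)" if ev: "eigenvalue X x" and x0: "x \<noteq> 0" for x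
  proof -
    obtain w where w: "w \<in> carrier_vec m" "w \<noteq> 0\<^sub>v m" "X *\<^sub>v w = x \<cdot>\<^sub>v w" using eigD[OF ev X] by blast
    have "Y *\<^sub>v (x \<cdot>\<^sub>v w) = x \<cdot>\<^sub>v w" using YX[OF w(1)] w(3) by simp
    hence "x \<cdot>\<^sub>v (Y *\<^sub>v w) = x \<cdot>\<^sub>v w" using w Y by (simp add: mult_mat_vec)
    hence Yw: "Y *\<^sub>v w = w" using x0 smult_cancel_left by blast
    have "(X + Y) *\<^sub>v w = X *\<^sub>v w + Y *\<^sub>v w" using add_mult_distrib_mat_vec[OF X Y w(1)] .
    also have "\<dots> = (x + 1) \<cdot>\<^sub>v w" unfolding w(3) Yw by (simp add: add_smult_distrib_vec)
    finally show ?thesis by (rule eigI[OF XY w(1,2)])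
  qed
  have eXY2: "t = 0 \<or> eigenvalue X (t - 1)" if ev: "eigenvalue (X + Y) t" for t
  proof (cases "t = 0")
    case False
    obtain w where w: "w \<in> carrier_vec m" "w \<noteq> 0\<^sub>v m" "(X + Y) *\<^sub>v w = t \<cdot>\<^sub>v w" using eigD[OF ev XY] by blast
    have XYw: "X *\<^sub>v w + Y *\<^sub>v w = t \<cdot>\<^sub>v w" using add_mult_distrib_mat_vec[OF X Y w(1)] w(3) by simp
    have Xw: "X *\<^sub>v w \<in> carrier_vec m" and Yw: "Y *\<^sub>v w \<in> carrier_vec m" using X Y w by auto
    have "Y *\<^sub>v (t \<cdot>\<^sub>v w) = Y *\<^sub>v (X *\<^sub>v w + Y *\<^sub>v w)" using XYw by simp
    also have "\<dots> = Y *\<^sub>v (X *\<^sub>v w) + Y *\<^sub>v (Y *\<^sub>v w)" by (rule mult_add_distrib_mat_vec[OF Y Xw Yw])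
    also have "\<dots> = t \<cdot>\<^sub>v w" using YX[OF w(1)] YY[OF w(1)] XYw by simp
    finally have "t \<cdot>\<^sub>v (Y *\<^sub>v w) = t \<cdot>\<^sub>v w" using w Y by (simp add: mult_mat_vec)
    hence Yw1: "Y *\<^sub>v w = w" using False smult_cancel_left by blast
    have "X *\<^sub>v w = (t - 1) \<cdot>\<^sub>v w"
    proof (rule eq_vecI)
      fix i assume i: "i < dim_vec ((t - 1) \<cdot>\<^sub>v w)"
      hence im: "i < m" using w by simp
      have "(X *\<^sub>v w + Y *\<^sub>v w) $ i = (t \<cdot>\<^sub>v w) $ i" using XYw by simp
      hence "(X *\<^sub>v w) $ i + w $ i = t * w $ i" using im Xw Yw Yw1 w by simp
      thus "(X *\<^sub>v w) $ i = ((t - 1) \<cdot>\<^sub>v w) $ i" using im w by (simp add: algebra_simps)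
    qed (use X w in simp)
    thus ?thesis using eigI[OF X w(1,2)] by blast
  qed simp
  define SX where "SX = {x. eigenvalue X x}"
  define SY where "SY = {x. eigenvalue Y x}"
  define SXY where "SXY = {x. eigenvalue (X + Y) x}"
  have fX: "finite SX" unfolding SX_def by (rule finite_eig[OF X])
  have fY: "finite SY" unfolding SY_def by (rule finite_eig[OF Y])
  have fXY: "finite SXY" unfolding SXY_def by (rule finite_eig[OF XY])
  have maxY: "Max SY = 1"
    by (rule Max_eqI[OF fY]) (use eY eY1 in \<open>force simp: SY_def\<close>)+
  define mu where "mu = Max SX"
  have mu: "mu \<in> SX" unfolding mu_def using fX eX by (intro Max_in) (auto simp: SX_def)
  have mupos: "mu > 0"
  proof -
    have "1/kap \<le> mu" unfolding mu_def using fX eX by (intro Max_ge) (auto simp: SX_def)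
    moreover have "0 < 1/kap" using kap(1) by simp
    ultimately show ?thesis by linarith
  qed
  have maxXY: "Max SXY = mu + 1"
  proof (rule Max_eqI[OF fXY])
    fix t assume "t \<in> SXY"
    hence "t = 0 \<or> t - 1 \<in> SX" using eXY2 unfolding SXY_def SX_def by auto
    moreover have "t - 1 \<in> SX \<Longrightarrow> t - 1 \<le> mu" unfolding mu_def using fX by (rule Max_ge)
    ultimately show "t \<le> mu + 1" using mupos by auto
  next
    show "mu + 1 \<in> SXY" using eXY1[of mu] mu mupos unfolding SXY_def SX_def by auto
  qed
  show ?thesis unfolding lambda_max_def X_def[symmetric] Y_def[symmetric]
    using maxXY maxY unfolding mu_def SX_def SY_def SXY_def by simp
qed

lemma sym_edge_rel: "sym (edge_rel F)"
  unfolding edge_rel_def sym_def by auto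

lemma D_tree_entry:
  assumes "i < n" "l < n - 1" "n - 1 \<le> length es"
  shows "D_tree n es $$ (i,l) = (if i = fst (es!l) then 1 else if i = snd (es!l) then -1 else 0)"
  using assms unfolding D_tree_def incidence_mat_def by simp

lemma tree_inj:
  assumes vg: "valid_graph n es" and len: "length es \<ge> n - 1"
    and st: "spanning_tree n (take (n-1) es)"
    and x: "x \<in> carrier_vec (n-1)" and Dx: "D_tree n es *\<^sub>v x = 0\<^sub>v n"
  shows "x = 0\<^sub>v (n-1)"
proof (rule ccontr)
  assume "x \<noteq> 0\<^sub>v (n-1)"
  then obtain k where k: "k < n - 1" "x $ k \<noteq> 0"
    using x by (metis eq_vecI carrier_vecD index_zero_vec(1) index_zero_vec(2))
  define F where "F = take (n-1) es"
  have lenF: "length F = n - 1" unfolding F_def using len by simp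
  have Fnth: "F ! l = es ! l" if "l < n - 1" for l unfolding F_def using that by simp
  obtain a b where ab: "es ! k = (a,b)" by (cases "es ! k")
  have esk: "es ! k \<in> set es" using k len by simp
  have abn: "a < n" "b < n" "a \<noteq> b" using vg esk ab unfolding valid_graph_def by auto
  define F' where "F' = take k F @ drop (Suc k) F"
  have ncon: "\<not> connected_on n F'" using st k lenF unfolding spanning_tree_def F'_def F_def by auto
  have setF: "set F \<subseteq> set F' \<union> {(a,b)}"
  proof -
    have "F = take k F @ [F ! k] @ drop (Suc k) F" using k lenF by (simp add: id_take_nth_drop)
    hence "set F = set (take k F) \<union> {F ! k} \<union> set (drop (Suc k) F)"
      by (metis Un_insert_right append_Cons append_Nil list.simps(15) set_append sup_bot.right_neutral)
    thus ?thesis unfolding F'_def using Fnth[OF k(1)] ab by auto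
  qed
  have nab: "(a,b) \<notin> (edge_rel F')\<^sup>*"
  proof
    assume abr: "(a,b) \<in> (edge_rel F')\<^sup>*"
    have bar: "(b,a) \<in> (edge_rel F')\<^sup>*" using abr sym_rtrancl[OF sym_edge_rel[of F']] unfolding sym_def by blast
    have "edge_rel F \<subseteq> (edge_rel F')\<^sup>*"
    proof
      fix e assume "e \<in> edge_rel F"
      then obtain c d where e: "e = (c,d)" "(c,d) \<in> set F \<or> (d,c) \<in> set F" unfolding edge_rel_def by auto
      show "e \<in> (edge_rel F')\<^sup>*"
      proof (cases "(c,d) = (a,b) \<or> (d,c) = (a,b)")
        case True thus ?thesis using abr bar e by auto
      next
        case False
        hence "(c,d) \<in> set F' \<or> (d,c) \<in> set F'" using e setF by auto
        hence "(c,d) \<in> edge_rel F'" unfolding edge_rel_def by auto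
        thus ?thesis using e by auto
      qed
    qed
    hence "(edge_rel F)\<^sup>* \<subseteq> (edge_rel F')\<^sup>*" by (rule rtrancl_subset_rtrancl)
    moreover have "connected_on n F" using st unfolding spanning_tree_def F_def by auto
    ultimately have "connected_on n F'" unfolding connected_on_def by blast
    thus False using ncon by simp
  qed
  define T where "T = {i. i < n \<and> (a,i) \<in> (edge_rel F')\<^sup>*}"
  have finT: "finite T" unfolding T_def by simp
  have aT: "a \<in> T" and bT: "b \<notin> T" unfolding T_def using abn nab by auto
  have closed: "(fst (es ! l) \<in> T) = (snd (es ! l) \<in> T)" if l: "l < n - 1" "l \<noteq> k" for l
  proof -
    have "F ! l \<in> set F'"
    proof (cases "l < k")
      case True
      hence "take k F ! l = F ! l" by simp
      moreover have "l < length (take k F)" using True k lenF by simp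
      ultimately show ?thesis unfolding F'_def by (metis UnI1 nth_mem set_append)
    next
      case False
      hence lk: "l > k" using l by simp
      have "drop (Suc k) F ! (l - Suc k) = F ! l" using lk lenF l by simp
      moreover have "l - Suc k < length (drop (Suc k) F)" using lk lenF l by simp
      ultimately show ?thesis unfolding F'_def by (metis UnI2 nth_mem set_append)
    qed
    obtain c d where cd: "es ! l = (c,d)" by (cases "es ! l")
    have "(c,d) \<in> set F'" using \<open>F ! l \<in> set F'\<close> Fnth[OF l(1)] cd by simp
    hence "(c,d) \<in> edge_rel F'" "(d,c) \<in> edge_rel F'" unfolding edge_rel_def by auto
    have esl: "es ! l \<in> set es" using l len by simp
    have "c < n" "d < n" using vg esl cd unfolding valid_graph_def by auto
    show ?thesis unfolding T_def cd using \<open>(c,d) \<in> edge_rel F'\<close> \<open>(d,c) \<in> edge_rel F'\<close> \<open>c < n\<close> \<open>d < n\<close>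
      by (auto intro: rtrancl_into_rtrancl)
  qed
  define g where "g l = (\<Sum>i\<in>T. D_tree n es $$ (i,l))" for l
  have gl: "g l = (if fst (es!l) \<in> T then 1 else 0) - (if snd (es!l) \<in> T then 1 else 0)" if l: "l < n - 1" for l
  proof -
    have esl: "es ! l \<in> set es" using l len by simp
    have ne: "fst (es!l) \<noteq> snd (es!l)" using vg esl unfolding valid_graph_def by auto
    have "g l = (\<Sum>i\<in>T. (if i = fst (es!l) then 1 else 0) - (if i = snd (es!l) then 1 else 0))"
      unfolding g_def by (rule sum.cong) (use l len ne in \<open>auto simp: T_def D_tree_entry\<close>)
    also have "\<dots> = (if fst (es!l) \<in> T then 1 else 0) - (if snd (es!l) \<in> T then 1 else 0)"
      by (simp add: sum_subtractf finT)
    finally show ?thesis .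
  qed
  have "0 = (\<Sum>i\<in>T. (D_tree n es *\<^sub>v x) $ i)" using Dx by (simp add: T_def)
  also have "\<dots> = (\<Sum>i\<in>T. \<Sum>l<n-1. D_tree n es $$ (i,l) * x $ l)"
    by (rule sum.cong) (use x in \<open>auto simp: T_def D_tree_def scalar_prod_def lessThan_atLeast0\<close>)
  also have "\<dots> = (\<Sum>l<n-1. g l * x $ l)"
    unfolding g_def by (subst sum.swap) (simp add: sum_distrib_right)
  also have "\<dots> = (\<Sum>l<n-1. if l = k then x $ k else 0)"
    by (rule sum.cong) (use gl closed aT bT ab in auto)
  also have "\<dots> = x $ k" using k by simp
  finally show False using k by simp
qed

lemma inv_exists:
  fixes A :: "real mat"
  assumes A: "A \<in> carrier_mat k k" and inj: "\<forall>v\<in>carrier_vec k. A *\<^sub>v v = 0\<^sub>v k \<longrightarrow> v = 0\<^sub>v k"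
  shows "\<exists>Bi. Bi \<in> carrier_mat k k \<and> A * Bi = 1\<^sub>m k \<and> Bi * A = 1\<^sub>m k"
proof -
  have "det A \<noteq> 0" using det_0_iff_vec_prod_zero_field[OF A] inj by auto
  from det_non_zero_imp_unit[OF A this, of "()"]
  show ?thesis unfolding Units_def ring_mat_def by auto
qed

lemma matinv_eq:
  assumes A: "A \<in> carrier_mat k k" and Bi: "Bi \<in> carrier_mat k k" and AB: "A * Bi = 1\<^sub>m k" and BA: "Bi * A = 1\<^sub>m k"
  shows "matinv A = Bi"
proof -
  have dr: "dim_row A = k" using A by simp
  have ex: "\<exists>C. C \<in> carrier_mat (dim_row A) (dim_row A) \<and> A * C = 1\<^sub>m (dim_row A) \<and> C * A = 1\<^sub>m (dim_row A)"
    using Bi AB BA dr by auto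
  define C where "C = matinv A"
  have C: "C \<in> carrier_mat k k" "A * C = 1\<^sub>m k" "C * A = 1\<^sub>m k"
    using someI_ex[OF ex] unfolding C_def matinv_def dr by auto
  have "C = C * (A * Bi)" using AB C by simp
  also have "\<dots> = (C * A) * Bi" using assoc_mult_mat[OF C(1) A Bi] by simp
  also have "\<dots> = Bi" using C Bi by simp
  finally show ?thesis unfolding C_def .
qed

lemma diag_mv: "y \<in> carrier_vec k \<Longrightarrow> mat_diag k f *\<^sub>v y = vec k (\<lambda>i. f i * y $ i)"
proof (rule eq_vecI)
  fix i assume y: "y \<in> carrier_vec k" and i: "i < dim_vec (vec k (\<lambda>i. f i * y $ i))"
  hence ik: "i < k" by simp
  have "(mat_diag k f *\<^sub>v y) $ i = (\<Sum>j\<in>{0..<k}. (if i = j then f i else 0) * y $ j)"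
    using ik y by (simp add: mat_diag_def scalar_prod_def) (rule sum.cong, auto)
  also have "\<dots> = (\<Sum>j\<in>{0..<k}. if j = i then f i * y $ j else 0)" by (rule sum.cong) auto
  also have "\<dots> = f i * y $ i" using ik by simp
  finally show "(mat_diag k f *\<^sub>v y) $ i = vec k (\<lambda>i. f i * y $ i) $ i" using ik by simp
qed (simp add: mat_diag_def)

lemma transpose_diag: "transpose_mat (mat_diag k f) = mat_diag k f"
  by (rule eq_matI) (auto simp: mat_diag_def)

lemma diag_cong: "(\<And>i. i < k \<Longrightarrow> f i = g i) \<Longrightarrow> mat_diag k f = mat_diag k g"
  by (rule eq_matI) (auto simp: mat_diag_def)

lemma diag_one: "mat_diag k (\<lambda>_. 1) = (1\<^sub>m k :: real mat)"
  by (rule eq_matI) (auto simp: mat_diag_def)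

theorem lemma7:
  fixes n :: nat and es :: "(nat \<times> nat) list" and w \<epsilon> :: "nat \<Rightarrow> real"
  assumes "n \<ge> 2"
    and "valid_graph n es"
    and "length es \<ge> n - 1"
    and "spanning_tree n (take (n-1) es)"
    and "\<And>l. l < length es \<Longrightarrow> w l > 0"
    and "\<And>i. i < n \<Longrightarrow> \<epsilon> i > 0"
  shows "let m = length es; R = R_mat n es; W = mat_diag m w;
             Wh = mat_diag m (\<lambda>l. sqrt (w l)); L = L_es_tau n es \<epsilon>;
             X = Wh * R\<^sup>T * matinv (R * W * R\<^sup>T * L * R * W * R\<^sup>T) * R * Wh;
             Y = Wh * R\<^sup>T * matinv (R * W * R\<^sup>T) * R * Wh
         in lambda_max (X + Y) = lambda_max X + lambda_max Y"
proof -
  note n2 = assms(1) and vg = assms(2) and len = assms(3) and st = assms(4)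
    and wpos = assms(5) and epos = assms(6)
  define m where "m = length es"
  define p where "p = n - 1"
  have p: "p > 0" unfolding p_def using n2 by simp
  define R where "R = R_mat n es"
  define W where "W = mat_diag m w"
  define Wh where "Wh = mat_diag m (\<lambda>l. sqrt (w l))"
  define L where "L = L_es_tau n es \<epsilon>"
  define D where "D = D_tree n es"
  define Ei where "Ei = mat_diag n (\<lambda>i. 1 / \<epsilon> i)"
  have R: "R \<in> carrier_mat p m" unfolding R_def R_mat_def p_def m_def by simp
  have Rt: "transpose_mat R \<in> carrier_mat m p" using R by simp
  have W: "W \<in> carrier_mat m m" and Wh: "Wh \<in> carrier_mat m m" unfolding W_def Wh_def by auto
  have D: "D \<in> carrier_mat n p" unfolding D_def D_tree_def p_def by simp
  have Dt: "transpose_mat D \<in> carrier_mat p n" using D by simp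
  have Ei: "Ei \<in> carrier_mat n n" unfolding Ei_def by simp
  have WhWh: "Wh * Wh = W" unfolding Wh_def W_def mat_diag_diag
    by (rule diag_cong) (use wpos in \<open>force simp: m_def\<close>)
  have Wht: "transpose_mat Wh = Wh" unfolding Wh_def by (rule transpose_diag)
  have Eit: "transpose_mat Ei = Ei" unfolding Ei_def by (rule transpose_diag)
  have Einv: "matinv (mat_diag n \<epsilon>) = Ei"
  proof (rule matinv_eq[of _ n])
    show "mat_diag n \<epsilon> * Ei = 1\<^sub>m n" unfolding Ei_def mat_diag_diag diag_one[symmetric]
      by (rule diag_cong) (use epos in force)
    show "Ei * mat_diag n \<epsilon> = 1\<^sub>m n" unfolding Ei_def mat_diag_diag diag_one[symmetric]
      by (rule diag_cong) (use epos in force)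
  qed (auto simp: Ei_def)
  have Ldef: "L = transpose_mat D * Ei * D" unfolding L_def L_es_tau_def Einv D_def ..
  have Lc: "L \<in> carrier_mat p p" unfolding Ldef using D Ei by simp
  have Ls: "transpose_mat L = L"
  proof -
    have DtEi: "transpose_mat D * Ei \<in> carrier_mat p n" using D Ei by simp
    have "transpose_mat L = transpose_mat D * transpose_mat (transpose_mat D * Ei)"
      unfolding Ldef by (rule transpose_mult[OF DtEi D])
    also have "transpose_mat (transpose_mat D * Ei) = Ei * D"
      using transpose_mult[OF Dt Ei] Eit by simp
    also have "transpose_mat D * (Ei * D) = L" unfolding Ldef using assoc_mult_mat[OF Dt Ei D] by simp
    finally show ?thesis .
  qed
  have Lpd: "\<forall>a\<in>carrier_vec p. a \<noteq> 0\<^sub>v p \<longrightarrow> a \<bullet> (L *\<^sub>v a) > 0"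
  proof (intro ballI impI)
    fix a :: "real vec" assume a: "a \<in> carrier_vec p" "a \<noteq> 0\<^sub>v p"
    define y where "y = D *\<^sub>v a"
    have y: "y \<in> carrier_vec n" unfolding y_def using D a by simp
    have yne: "y \<noteq> 0\<^sub>v n" using tree_inj[OF vg len st, of a] a unfolding y_def D_def p_def by auto
    have Eiy: "Ei *\<^sub>v y \<in> carrier_vec n" using Ei y by simp
    have DtEi: "transpose_mat D * Ei \<in> carrier_mat p n" using D Ei by simp
    have "L *\<^sub>v a = (transpose_mat D * Ei) *\<^sub>v y"
      unfolding Ldef y_def by (rule assoc_mult_mat_vec[OF DtEi D a(1)])
    also have "\<dots> = transpose_mat D *\<^sub>v (Ei *\<^sub>v y)" by (rule assoc_mult_mat_vec[OF Dt Ei y])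
    finally have "L *\<^sub>v a = transpose_mat D *\<^sub>v (Ei *\<^sub>v y)" .
    hence "a \<bullet> (L *\<^sub>v a) = a \<bullet> (transpose_mat D *\<^sub>v (Ei *\<^sub>v y))" by simp
    also have "\<dots> = (transpose_mat D *\<^sub>v (Ei *\<^sub>v y)) \<bullet> a"
      by (rule comm_scalar_prod[OF a(1)]) (use Dt Eiy in simp)
    also have "\<dots> = (Ei *\<^sub>v y) \<bullet> y" using transpose_vec_mult_scalar[OF D a(1) Eiy] unfolding y_def[symmetric] .
    also have "\<dots> = (\<Sum>i\<in>{0..<n}. (y $ i / \<epsilon> i) * y $ i)"
      unfolding Ei_def diag_mv[OF y] using y by (simp add: scalar_prod_def)
    also have "\<dots> > 0"
    proof -
      obtain i where i: "i < n" "y $ i \<noteq> 0"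
        using y yne by (metis eq_vecI carrier_vecD index_zero_vec(1) index_zero_vec(2))
      have pos: "(y $ j / \<epsilon> j) * y $ j \<ge> 0" if "j < n" for j
      proof -
        have "(y $ j / \<epsilon> j) * y $ j = (y $ j * y $ j) / \<epsilon> j" by simp
        moreover have "(y $ j * y $ j) / \<epsilon> j \<ge> 0"
          by (rule divide_nonneg_pos) (use epos[OF that] in auto)
        ultimately show ?thesis by simp
      qed
      have "(y $ i / \<epsilon> i) * y $ i > 0"
        using epos[OF i(1)] i(2) by (auto simp: zero_less_mult_iff zero_less_divide_iff linorder_neq_iff)
      thus ?thesis by (intro sum_pos2[of _ i]) (use i pos in auto)
    qed
    finally show "a \<bullet> (L *\<^sub>v a) > 0" .
  qed
  define B where "B = Wh * transpose_mat R"
  have Bc: "B \<in> carrier_mat m p" unfolding B_def using Wh Rt by simp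
  have Bt: "transpose_mat B = R * Wh"
    unfolding B_def using transpose_mult[OF Wh Rt] Wht by simp
  have Btc: "transpose_mat B \<in> carrier_mat p m" using Bc by simp
  have BtB: "transpose_mat B * B = R * W * transpose_mat R"
  proof -
    have "transpose_mat B * B = R * Wh * (Wh * transpose_mat R)" unfolding Bt by (simp only: B_def)
    also have "\<dots> = R * Wh * Wh * transpose_mat R"
      using assoc_mult_mat[of "R * Wh" p m Wh m "transpose_mat R" p] R Wh Rt by simp
    also have "R * Wh * Wh = R * W" using assoc_mult_mat[OF R Wh Wh] WhWh by simp
    finally show ?thesis .
  qed
  have Binj: "\<forall>u\<in>carrier_vec p. B *\<^sub>v u = 0\<^sub>v m \<longrightarrow> u = 0\<^sub>v p"
  proof (intro ballI impI)
    fix u :: "real vec" assume u: "u \<in> carrier_vec p" and Bu: "B *\<^sub>v u = 0\<^sub>v m"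
    have Rtu: "transpose_mat R *\<^sub>v u \<in> carrier_vec m" using Rt u by simp
    have Bu': "B *\<^sub>v u = vec m (\<lambda>l. sqrt (w l) * (transpose_mat R *\<^sub>v u) $ l)"
      unfolding B_def using assoc_mult_mat_vec[OF Wh Rt u] diag_mv[OF Rtu] unfolding Wh_def by simp
    show "u = 0\<^sub>v p"
    proof (rule eq_vecI)
      fix l assume "l < dim_vec (0\<^sub>v p :: real vec)"
      hence lp: "l < p" by simp
      hence lm: "l < m" unfolding p_def m_def using len by simp
      have "(transpose_mat R *\<^sub>v u) $ l = (\<Sum>i\<in>{0..<p}. R $$ (i, l) * u $ i)"
        using lm Rt R u by (simp add: scalar_prod_def mult.commute)
      also have "\<dots> = (\<Sum>i\<in>{0..<p}. if i = l then u $ i else 0)"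
        by (rule sum.cong) (use lp lm in \<open>auto simp: R_def R_mat_def p_def m_def\<close>)
      also have "\<dots> = u $ l" using lp by simp
      finally have "(transpose_mat R *\<^sub>v u) $ l = u $ l" .
      moreover have "(B *\<^sub>v u) $ l = 0" using Bu lm by simp
      ultimately have "sqrt (w l) * u $ l = 0" using Bu' lm by simp
      moreover have "sqrt (w l) > 0" using wpos[of l] lm unfolding m_def by simp
      ultimately show "u $ l = (0\<^sub>v p :: real vec) $ l" using lp by simp
    qed (use u in simp)
  qed
  define M where "M = transpose_mat B * B"
  have M: "M \<in> carrier_mat p p" unfolding M_def using Bc by simp
  have Minj: "\<forall>v\<in>carrier_vec p. M *\<^sub>v v = 0\<^sub>v p \<longrightarrow> v = 0\<^sub>v p"
  proof (intro ballI impI)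
    fix a :: "real vec" assume a: "a \<in> carrier_vec p" and Ma: "M *\<^sub>v a = 0\<^sub>v p"
    have Ba: "B *\<^sub>v a \<in> carrier_vec m" using Bc a by simp
    have "0 = a \<bullet> (M *\<^sub>v a)" using Ma a by simp
    also have "\<dots> = a \<bullet> (transpose_mat B *\<^sub>v (B *\<^sub>v a))"
      unfolding M_def using assoc_mult_mat_vec[OF Btc Bc a] by simp
    also have "\<dots> = (transpose_mat B *\<^sub>v (B *\<^sub>v a)) \<bullet> a"
      by (rule comm_scalar_prod[OF a]) (use Btc Ba in simp)
    also have "\<dots> = (B *\<^sub>v a) \<bullet> (B *\<^sub>v a)"
      by (rule transpose_vec_mult_scalar[OF Bc a Ba])
    finally have "(B *\<^sub>v a) \<bullet> (B *\<^sub>v a) = 0" by simp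
    hence "B *\<^sub>v a = 0\<^sub>v m" using sq_pos[OF Ba] by force
    thus "a = 0\<^sub>v p" using Binj a by blast
  qed
  obtain Minv where Minv: "Minv \<in> carrier_mat p p" "M * Minv = 1\<^sub>m p" "Minv * M = 1\<^sub>m p"
    using inv_exists[OF M Minj] by blast
  have Linj: "\<forall>v\<in>carrier_vec p. L *\<^sub>v v = 0\<^sub>v p \<longrightarrow> v = 0\<^sub>v p"
  proof (intro ballI impI)
    fix a :: "real vec" assume a: "a \<in> carrier_vec p" and La: "L *\<^sub>v a = 0\<^sub>v p"
    have "a \<bullet> (L *\<^sub>v a) = 0" using La a by simp
    thus "a = 0\<^sub>v p" using Lpd a by force
  qed
  define Q where "Q = M * L * M"
  have Q: "Q \<in> carrier_mat p p" unfolding Q_def using M Lc by simp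
  have Qinj: "\<forall>v\<in>carrier_vec p. Q *\<^sub>v v = 0\<^sub>v p \<longrightarrow> v = 0\<^sub>v p"
  proof (intro ballI impI)
    fix a :: "real vec" assume a: "a \<in> carrier_vec p" and Qa: "Q *\<^sub>v a = 0\<^sub>v p"
    have MLc: "M * L \<in> carrier_mat p p" using M Lc by simp
    have Ma: "M *\<^sub>v a \<in> carrier_vec p" using M a by simp
    have LMa: "L *\<^sub>v (M *\<^sub>v a) \<in> carrier_vec p" using Lc Ma by simp
    have "Q *\<^sub>v a = M *\<^sub>v (L *\<^sub>v (M *\<^sub>v a))"
      unfolding Q_def using assoc_mult_mat_vec[OF MLc M a] assoc_mult_mat_vec[OF M Lc Ma] by simp
    hence "L *\<^sub>v (M *\<^sub>v a) = 0\<^sub>v p" using Minj LMa Qa by simp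
    hence "M *\<^sub>v a = 0\<^sub>v p" using Linj Ma by simp
    thus "a = 0\<^sub>v p" using Minj a by simp
  qed
  obtain Qinv where Qinv: "Qinv \<in> carrier_mat p p" "Q * Qinv = 1\<^sub>m p" "Qinv * Q = 1\<^sub>m p"
    using inv_exists[OF Q Qinj] by blast
  have core': "lambda_max (B * Qinv * transpose_mat B + B * Minv * transpose_mat B)
       = lambda_max (B * Qinv * transpose_mat B) + lambda_max (B * Minv * transpose_mat B)"
    by (rule core[OF Bc Lc Ls Lpd Binj p Minv[unfolded M_def] Qinv[unfolded Q_def M_def]])
  have Mexp: "R * W * transpose_mat R = M" unfolding M_def BtB ..
  have Qexp: "R * W * transpose_mat R * L * R * W * transpose_mat R = Q"
  proof -
    have RW: "R * W \<in> carrier_mat p m" using R W by simp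
    have MLc: "M * L \<in> carrier_mat p p" using M Lc by simp
    have "R * W * transpose_mat R * L * R * W * transpose_mat R = M * L * R * W * transpose_mat R"
      unfolding Mexp ..
    also have "M * L * R * W = M * L * (R * W)" using assoc_mult_mat[OF MLc R W] .
    also have "M * L * (R * W) * transpose_mat R = M * L * (R * W * transpose_mat R)"
      using assoc_mult_mat[OF MLc RW Rt] .
    finally show ?thesis unfolding Mexp Q_def .
  qed
  have minvM: "matinv (R * W * transpose_mat R) = Minv" unfolding Mexp by (rule matinv_eq[OF M Minv])
  have minvQ: "matinv (R * W * transpose_mat R * L * R * W * transpose_mat R) = Qinv"
    unfolding Qexp by (rule matinv_eq[OF Q Qinv])
  have shape: "Wh * transpose_mat R * C * R * Wh = B * C * transpose_mat B" if C: "C \<in> carrier_mat p p" for C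
  proof -
    have BC: "B * C \<in> carrier_mat m p" using Bc C by simp
    have "B * C * transpose_mat B = B * C * R * Wh"
      unfolding Bt using assoc_mult_mat[OF BC R Wh] by simp
    thus ?thesis unfolding B_def by simp
  qed
  show ?thesis
    unfolding Let_def m_def[symmetric] R_def[symmetric] W_def[symmetric] Wh_def[symmetric] L_def[symmetric]
    unfolding minvM minvQ shape[OF Minv(1)] shape[OF Qinv(1)]
    by (rule core')
qed

end
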